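(* Let $n\ge 1$. As polynomials in the indeterminates $x$ and $y$ with coefficients in $\mathbb{Q}[\mathfrak{S}_n]$, \[\rho^{(\ell)}(x)\rho^{(\ell)}(y)=\rho^{(\ell)}(xy),\qquad \rho^{(r)}(x)\rho^{(r)}(y)=\rho^{(\ell)}(xy),\qquad \rho^{(\ell)}(x)\rho^{(r)}(y)=\rho^{(r)}(xy),\qquad \rho^{(r)}(x)\rho^{(\ell)}(y)=\rho^{(r)}(xy),\] where $\rho^{(\ell)}(x)=\sum_{\pi\in\mathfrak{S}_n}\Omega^{(\ell)}(\pi;(x-1)/2)\,\pi$ and $\rho^{(r)}(x)=\sum_{\pi\in\mathfrak{S}_n}\Omega^{(r)}(\pi;(x-1)/2)\,\pi$.
   Context: $\mathfrak{S}_n$ is the symmetric group on $[n]$, permutations are words $(\pi(1),\dots,\pi(n))$, and multiplication in $\mathbb{Q}[\mathfrak{S}_n]$ is composition $(\sigma\tau)(i)=\sigma(\tau(i))$. Let $Z$ be a finite totally ordered set each of whose elements is declared "plus-type" or "minus-type". For $\pi\in\mathfrak{S}_n$ let $N(\pi;Z)$ be the number of sequences $(a_1,\dots,a_n)\in Z^n$ with $a_1\le\dots\le a_n$ such that for every $s\in[n-1]$: if $\pi(s)<\pi(s+1)$ then $a_s<a_{s+1}$ or ($a_s=a_{s+1}$ is plus-type); if $\pi(s)>\pi(s+1)$ then $a_s<a_{s+1}$ or ($a_s=a_{s+1}$ is minus-type). For a positive integer $k$ define the left enriched order polynomial $\Omega^{(\ell)}(\pi;k)=N(\pi;Z)$ with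 $Z=\{0<\bar1<1<\bar2<2<\dots<\bar k<k\}$ and the right enriched order polynomial $\Omega^{(r)}(\pi;k)=N(\pi;Z)$ with $Z=\{\bar1<1<\bar2<2<\dots<\bar k<k<\overline{k+1}\}$, where $0$ and the unbarred $j$ are plus-type and barred elements $\bar j$ are minus-type. As functions of $k$ these are restrictions of unique polynomials with rational coefficients, denoted by the same symbols; these polynomials are evaluated at $(x-1)/2$ above. *)

theory Defs
  imports "HOL-Combinatorics.Permutations" "HOL-Computational_Algebra.Polynomial"
begin

text \<open>Permutations of [n] are functions nat => nat that permute {1..n}.
  Elements of the group algebra Q[S_n] are functions (nat => nat) => rat,
  the coefficient of pi, zero outside S_n.\<close>

definition Sn :: "nat \<Rightarrow> (nat \<Rightarrow> nat) set" where
  "Sn n = {p. p permutes {1..n}}"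

definition gmult :: "nat \<Rightarrow> ((nat \<Rightarrow> nat) \<Rightarrow> rat) \<Rightarrow> ((nat \<Rightarrow> nat) \<Rightarrow> rat) \<Rightarrow> ((nat \<Rightarrow> nat) \<Rightarrow> rat)" where
  "gmult n a b = (\<lambda>p. if p \<in> Sn n then
      (\<Sum>s\<in>Sn n. \<Sum>t\<in>Sn n. if s \<circ> t = p then a s * b t else 0) else 0)"

text \<open>N(pi;Z) where Z = {0 < 1 < ... < m-1} (an order-isomorphic copy),
  and isplus z says whether z is plus-type. Sequences a_1..a_n are functions
  on {1..n} (extensional, undefined = 0 outside).\<close>
definition Ncount :: "nat \<Rightarrow> nat \<Rightarrow> (nat \<Rightarrow> bool) \<Rightarrow> (nat \<Rightarrow> nat) \<Rightarrow> nat" where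
  "Ncount n m isplus p = card {a \<in> {1..n} \<rightarrow>\<^sub>E {..<m}.
      (\<forall>s\<in>{1..<n}. a s \<le> a (Suc s)) \<and>
      (\<forall>s\<in>{1..<n}. p s < p (Suc s) \<longrightarrow>
           (a s < a (Suc s) \<or> (a s = a (Suc s) \<and> isplus (a s)))) \<and>
      (\<forall>s\<in>{1..<n}. p s > p (Suc s) \<longrightarrow>
           (a s < a (Suc s) \<or> (a s = a (Suc s) \<and> \<not> isplus (a s))))}"

text \<open>Left: Z = {0 < bar1 < 1 < ... < bark < k}, encoded 0..2k:
  index 0 is 0, index 2j-1 is bar j, index 2j is j; plus-type = even index.\<close>
definition Omega_l :: "nat \<Rightarrow> (nat \<Rightarrow> nat) \<Rightarrow> nat \<Rightarrow> nat" where
  "Omega_l n p k = Ncount n (2*k+1) even p"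

text \<open>Right: Z = {bar1 < 1 < ... < bark < k < bar(k+1)}, encoded 0..2k:
  index 2j-2 is bar j, index 2j-1 is j; plus-type = odd index.\<close>
definition Omega_r :: "nat \<Rightarrow> (nat \<Rightarrow> nat) \<Rightarrow> nat \<Rightarrow> nat" where
  "Omega_r n p k = Ncount n (2*k+1) odd p"

definition Omega_l_poly :: "nat \<Rightarrow> (nat \<Rightarrow> nat) \<Rightarrow> rat poly" where
  "Omega_l_poly n p = (THE q. \<forall>k\<ge>1. poly q (of_nat k) = of_nat (Omega_l n p k))"

definition Omega_r_poly :: "nat \<Rightarrow> (nat \<Rightarrow> nat) \<Rightarrow> rat poly" where
  "Omega_r_poly n p = (THE q. \<forall>k\<ge>1. poly q (of_nat k) = of_nat (Omega_r n p k))"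

definition rho_l :: "nat \<Rightarrow> rat \<Rightarrow> (nat \<Rightarrow> nat) \<Rightarrow> rat" where
  "rho_l n x = (\<lambda>p. if p \<in> Sn n then poly (Omega_l_poly n p) ((x - 1) / 2) else 0)"

definition rho_r :: "nat \<Rightarrow> rat \<Rightarrow> (nat \<Rightarrow> nat) \<Rightarrow> rat" where
  "rho_r n x = (\<lambda>p. if p \<in> Sn n then poly (Omega_r_poly n p) ((x - 1) / 2) else 0)"

end

theory Submission
  imports Defs
begin


definition pf :: "(nat \<Rightarrow> rat) \<Rightarrow> bool" where
  "pf f \<longleftrightarrow> (\<exists>q. \<forall>k. f k = poly q (of_nat k))"

lemma pf_const: "pf (\<lambda>k. c)"
  unfolding pf_def by (rule exI[of _ "[:c:]"]) simp

lemma pf_id: "pf (\<lambda>k. of_nat k)"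
  unfolding pf_def by (rule exI[of _ "[:0,1:]"]) simp

lemma pf_add: "pf f \<Longrightarrow> pf g \<Longrightarrow> pf (\<lambda>k. f k + g k)"
  unfolding pf_def by (metis poly_add)

lemma pf_diff: "pf f \<Longrightarrow> pf g \<Longrightarrow> pf (\<lambda>k. f k - g k)"
  unfolding pf_def by (metis poly_diff)

lemma pf_mult: "pf f \<Longrightarrow> pf g \<Longrightarrow> pf (\<lambda>k. f k * g k)"
  unfolding pf_def by (metis poly_mult)

lemma pf_power: "pf f \<Longrightarrow> pf (\<lambda>k. f k ^ d)"
  by (induction d) (auto intro: pf_mult pf_const)

lemma pf_sum: "finite A \<Longrightarrow> (\<And>a. a \<in> A \<Longrightarrow> pf (f a)) \<Longrightarrow> pf (\<lambda>k. \<Sum>a\<in>A. f a k)"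
  by (induction A rule: finite_induct) (auto intro: pf_add pf_const)

lemma pf_cong: "pf f \<Longrightarrow> (\<And>k. f k = g k) \<Longrightarrow> pf g"
  by (metis ext)

lemma powsum_telescope:
  "(of_nat k :: rat) ^ Suc d = (\<Sum>e<d. of_nat (Suc d choose e) * (\<Sum>i<k. of_nat i ^ e)) + of_nat (Suc d) * (\<Sum>i<k. of_nat i ^ d)"
proof -
  have step: "(of_nat (Suc i) :: rat) ^ Suc d - of_nat i ^ Suc d = (\<Sum>e<d. of_nat (Suc d choose e) * of_nat i ^ e) + of_nat (Suc d) * of_nat i ^ d" for i
  proof -
    have "(of_nat (Suc i) :: rat) ^ Suc d = (of_nat i + 1) ^ Suc d" by (simp add: add.commute)
    also have "\<dots> = (\<Sum>e\<le>Suc d. of_nat (Suc d choose e) * of_nat i ^ e)"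
      by (subst binomial_ring) simp
    also have "\<dots> = (\<Sum>e<d. of_nat (Suc d choose e) * of_nat i ^ e) + of_nat (Suc d) * of_nat i ^ d + of_nat i ^ Suc d"
      by (simp add: lessThan_Suc_atMost[symmetric])
    finally show ?thesis by simp
  qed
  have "(of_nat k :: rat) ^ Suc d = (\<Sum>i<k. (of_nat (Suc i) :: rat) ^ Suc d - of_nat i ^ Suc d)"
    by (subst sum_lessThan_telescope[where f = "\<lambda>i. (of_nat i :: rat) ^ Suc d"]) simp
  also have "\<dots> = (\<Sum>i<k. (\<Sum>e<d. of_nat (Suc d choose e) * of_nat i ^ e) + of_nat (Suc d) * of_nat i ^ d)"
    using step by simp
  also have "\<dots> = (\<Sum>e<d. of_nat (Suc d choose e) * (\<Sum>i<k. of_nat i ^ e)) + of_nat (Suc d) * (\<Sum>i<k. of_nat i ^ d)"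
    by (simp add: sum.distrib sum_distrib_left sum.swap[of _ "{..<k}"])
  finally show ?thesis .
qed

lemma pf_powsum: "pf (\<lambda>k. \<Sum>i<k. (of_nat i :: rat) ^ d)"
proof (induction d rule: less_induct)
  case (less d)
  have "pf (\<lambda>k. (of_nat k ^ Suc d - (\<Sum>e<d. of_nat (Suc d choose e) * (\<Sum>i<k. of_nat i ^ e))) * (1 / of_nat (Suc d)))"
    by (intro pf_mult pf_diff pf_power pf_id pf_sum pf_const less) auto
  then show ?case
    by (rule pf_cong) (subst powsum_telescope, simp add: field_simps)
qed

lemma pf_antidiff: assumes "pf g" shows "pf (\<lambda>k. \<Sum>i<k. g i)"
proof -
  obtain q where q: "\<And>k. g k = poly q (of_nat k)" using assms unfolding pf_def by blast
  have "pf (\<lambda>k. \<Sum>e\<le>degree q. coeff q e * (\<Sum>i<k. (of_nat i :: rat) ^ e))"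
    by (intro pf_sum pf_mult pf_const pf_powsum) auto
  then show ?thesis
    by (rule pf_cong) (simp add: q poly_altdef sum_distrib_left sum.swap[of _ "{..<_}"])
qed



definition valid :: "nat \<Rightarrow> (nat \<Rightarrow> bool) \<Rightarrow> (nat \<Rightarrow> nat) \<Rightarrow> (nat \<Rightarrow> nat) \<Rightarrow> bool" where
 "valid n P p a \<longleftrightarrow> (\<forall>s\<in>{1..<n}. a s \<le> a (Suc s)) \<and>
      (\<forall>s\<in>{1..<n}. p s < p (Suc s) \<longrightarrow> (a s < a (Suc s) \<or> (a s = a (Suc s) \<and> P (a s)))) \<and>
      (\<forall>s\<in>{1..<n}. p s > p (Suc s) \<longrightarrow> (a s < a (Suc s) \<or> (a s = a (Suc s) \<and> \<not> P (a s))))"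

lemma Ncount_valid: "Ncount n m P p = card {a \<in> {1..n} \<rightarrow>\<^sub>E {..<m}. valid n P p a}"
  unfolding Ncount_def valid_def by simp

lemma valid_mono:
  assumes "valid n P p a" "1 \<le> s" "s \<le> t" "t \<le> n" shows "a s \<le> a t"
  using assms(3,4)
proof (induction t rule: dec_induct)
  case base then show ?case by simp
next
  case (step t)
  then have "a t \<le> a (Suc t)" using assms(1,2) unfolding valid_def by auto
  with step show ?case by simp
qed

lemma valid_cong: "(\<And>i. i \<in> {1..n} \<Longrightarrow> a i = b i) \<Longrightarrow> valid n P p a = valid n P p b"
  unfolding valid_def by (intro arg_cong2[where f="(\<and>)"] refl ball_cong) auto

definition ok :: "(nat \<Rightarrow> bool) \<Rightarrow> (nat \<Rightarrow> nat) \<Rightarrow> nat \<Rightarrow> nat \<Rightarrow> nat \<Rightarrow> bool" where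
  "ok P p n u v \<longleftrightarrow> u \<le> v \<and> (p n < p (Suc n) \<longrightarrow> u < v \<or> (u = v \<and> P u)) \<and>
      (p (Suc n) < p n \<longrightarrow> u < v \<or> (u = v \<and> \<not> P u))"

lemma valid_Suc: "1 \<le> n \<Longrightarrow> valid (Suc n) P p a \<longleftrightarrow> valid n P p a \<and> ok P p n (a n) (a (Suc n))"
proof -
  assume "1 \<le> n"
  then have e: "{1..<Suc n} = insert n {1..<n}" by auto
  show ?thesis unfolding valid_def ok_def e by auto
qed

definition EE :: "(nat \<Rightarrow> bool) \<Rightarrow> (nat \<Rightarrow> nat) \<Rightarrow> nat \<Rightarrow> nat \<Rightarrow> (nat \<Rightarrow> nat) set" where
  "EE P p n v = {a \<in> {1..n} \<rightarrow>\<^sub>E {..v}. valid n P p a \<and> a n = v}"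

lemma finite_EE: "finite (EE P p n v)"
  unfolding EE_def by (rule finite_subset[OF _ finite_PiE[of "{1..n}" "\<lambda>_. {..v}"]]) auto

lemma Ncount_split:
  assumes "1 \<le> n" shows "Ncount n m P p = (\<Sum>v<m. card (EE P p n v))"
proof -
  have "{a \<in> {1..n} \<rightarrow>\<^sub>E {..<m}. valid n P p a} = (\<Union>v<m. EE P p n v)"
  proof (intro equalityI subsetI)
    fix a assume a: "a \<in> {a \<in> {1..n} \<rightarrow>\<^sub>E {..<m}. valid n P p a}"
    have "a \<in> EE P p n (a n)"
      unfolding EE_def using a valid_mono[of n P p a _ n] assms by (auto simp: PiE_iff)
    moreover have "a n < m" using a assms by (auto simp: PiE_iff)
    ultimately show "a \<in> (\<Union>v<m. EE P p n v)" by auto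
  next
    fix a assume "a \<in> (\<Union>v<m. EE P p n v)"
    then obtain v where "v < m" "a \<in> EE P p n v" by auto
    then show "a \<in> {a \<in> {1..n} \<rightarrow>\<^sub>E {..<m}. valid n P p a}"
      unfolding EE_def by (auto simp: PiE_iff)
  qed
  then have "Ncount n m P p = card (\<Union>v<m. EE P p n v)" by (simp add: Ncount_valid)
  also have "\<dots> = (\<Sum>v<m. card (EE P p n v))"
    by (rule card_UN_disjoint) (simp_all add: finite_EE, auto simp: EE_def)
  finally show ?thesis .
qed

lemma EE_one: "card (EE P p 1 v) = 1"
proof -
  have "EE P p 1 v = {restrict (\<lambda>_. v) {1..1}}"
    unfolding EE_def valid_def by (auto simp: PiE_iff restrict_def fun_eq_iff extensional_def)
  then show ?thesis by simp
qed

lemma EE_Suc: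
  assumes n: "1 \<le> n"
  shows "card (EE P p (Suc n) v) = (\<Sum>u\<in>{u. ok P p n u v}. card (EE P p n u))"
proof -
  let ?U = "{u. ok P p n u v}"
  have finU: "finite ?U" by (rule finite_subset[of _ "{..v}"]) (auto simp: ok_def)
  have eq: "EE P p (Suc n) v = (\<Union>u\<in>?U. (\<lambda>a. a(Suc n := v)) ` EE P p n u)"
  proof (intro equalityI subsetI)
    fix b assume b: "b \<in> EE P p (Suc n) v"
    let ?a = "b(Suc n := undefined)"
    have vb: "valid (Suc n) P p b" and bS: "b (Suc n) = v" and bP: "b \<in> {1..Suc n} \<rightarrow>\<^sub>E {..v}"
      using b unfolding EE_def by auto
    have va: "valid n P p ?a" using vb valid_Suc[OF n] valid_cong[of n ?a b] by auto
    have okb: "ok P p n (b n) v" using vb valid_Suc[OF n] bS by auto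
    have "?a \<in> EE P p n (b n)"
      unfolding EE_def using va bP valid_mono[OF va, of _ n] n
      by (auto simp: PiE_iff extensional_def)
    moreover have "b = ?a(Suc n := v)" using bS by auto
    ultimately show "b \<in> (\<Union>u\<in>?U. (\<lambda>a. a(Suc n := v)) ` EE P p n u)" using okb by blast
  next
    fix b assume "b \<in> (\<Union>u\<in>?U. (\<lambda>a. a(Suc n := v)) ` EE P p n u)"
    then obtain u a where u: "ok P p n u v" and a: "a \<in> EE P p n u" and b: "b = a(Suc n := v)" by auto
    have va: "valid n P p a" and an: "a n = u" and aP: "a \<in> {1..n} \<rightarrow>\<^sub>E {..u}" using a unfolding EE_def by auto
    have "valid n P p b" using va valid_cong[of n b a] b by auto
    moreover have "b n = u" using an b by simp
    ultimately have "valid (Suc n) P p b" using valid_Suc[OF n] u b by simp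
    moreover have "b \<in> {1..Suc n} \<rightarrow>\<^sub>E {..v}"
    proof -
      have uv: "u \<le> v" using u by (simp add: ok_def)
      have "b i \<le> v" if "i \<in> {1..Suc n}" for i
      proof (cases "i = Suc n")
        case False then have "i \<in> {1..n}" using that by auto
        then have "a i \<le> u" using aP by (auto simp: PiE_iff)
        then show ?thesis using uv b False by simp
      qed (simp add: b)
      moreover have "b i = undefined" if "i \<notin> {1..Suc n}" for i
      proof -
        have "i \<noteq> Suc n" "i \<notin> {1..n}" using that by auto
        then show ?thesis using PiE_arb[OF aP] b by simp
      qed
      ultimately show ?thesis by (intro PiE_I) auto
    qed
    ultimately show "b \<in> EE P p (Suc n) v" unfolding EE_def using b by simp
  qed
  have inj: "inj_on (\<lambda>a. a(Suc n := v)) (EE P p n u)" for u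
  proof (rule inj_onI)
    fix a a'
    assume h: "a \<in> EE P p n u" "a' \<in> EE P p n u" "a(Suc n := v) = a'(Suc n := v)"
    show "a = a'"
    proof
      fix i show "a i = a' i"
      proof (cases "i = Suc n")
        case True
        have "a \<in> {1..n} \<rightarrow>\<^sub>E {..u}" "a' \<in> {1..n} \<rightarrow>\<^sub>E {..u}" using h unfolding EE_def by auto
        then show ?thesis using True PiE_arb[of a "{1..n}"] PiE_arb[of a' "{1..n}"] by simp
      next
        case False then show ?thesis using fun_cong[OF h(3), of i] by simp
      qed
    qed
  qed
  have "card (EE P p (Suc n) v) = (\<Sum>u\<in>?U. card ((\<lambda>a. a(Suc n := v)) ` EE P p n u))"
    unfolding eq
  proof (rule card_UN_disjoint[OF finU])
    show "\<forall>u\<in>?U. finite ((\<lambda>a. a(Suc n := v)) ` EE P p n u)" by (simp add: finite_EE)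
    show "\<forall>u\<in>?U. \<forall>u'\<in>?U. u \<noteq> u' \<longrightarrow> ((\<lambda>a. a(Suc n := v)) ` EE P p n u) \<inter> ((\<lambda>a. a(Suc n := v)) ` EE P p n u') = {}"
    proof (intro ballI impI)
      fix u u' :: nat assume uu: "u \<noteq> u'"
      show "((\<lambda>a. a(Suc n := v)) ` EE P p n u) \<inter> ((\<lambda>a. a(Suc n := v)) ` EE P p n u') = {}"
      proof (rule ccontr)
        assume "((\<lambda>a. a(Suc n := v)) ` EE P p n u) \<inter> ((\<lambda>a. a(Suc n := v)) ` EE P p n u') \<noteq> {}"
        then obtain a a' where h: "a \<in> EE P p n u" "a' \<in> EE P p n u'" "a(Suc n := v) = a'(Suc n := v)" by blast
        have "(a(Suc n := v)) n = (a'(Suc n := v)) n" by (simp only: h(3))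
        then have "a n = a' n" by simp
        then show False using h uu unfolding EE_def by auto
      qed
    qed
  qed
  also have "\<dots> = (\<Sum>u\<in>?U. card (EE P p n u))"
    by (intro sum.cong refl card_image inj)
  finally show ?thesis .
qed



lemma sum_double: "(\<Sum>u<2*(k::nat). f u) = (\<Sum>i<k. f (2*i) + f (2*i+1))"
  by (induction k) (simp_all add: algebra_simps)

lemma sum_double1: "(\<Sum>u<2*(k::nat)+1. f u) = (\<Sum>i<k. f (2*i) + f (2*i+1)) + f (2*k)"
  by (simp add: sum_double)

lemma ok_diag: "ok (\<lambda>z. even z = b) p n v v = ok (\<lambda>z. even z = b) p n (v mod 2) (v mod 2)"
  unfolding ok_def by simp

lemma U_eq: "{u. ok P p n u v} = {..<v} \<union> (if ok P p n v v then {v} else {})"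
  unfolding ok_def by auto

lemma EE_Suc': "1 \<le> n \<Longrightarrow> card (EE P p (Suc n) v) = (\<Sum>u<v. card (EE P p n u)) + (if ok P p n v v then card (EE P p n v) else 0)"
  by (simp add: EE_Suc U_eq)

lemma pf_EE:
  assumes "1 \<le> n"
  shows "pf (\<lambda>k. of_nat (card (EE (\<lambda>z. even z = b) p n (2*k)))) \<and>
         pf (\<lambda>k. of_nat (card (EE (\<lambda>z. even z = b) p n (2*k+1))))"
  using assms
proof (induction n rule: nat_induct_at_least)
  case base
  show ?case by (simp only: EE_one) (auto intro: pf_const)
next
  case (Suc n)
  let ?P = "\<lambda>z. even z = b"
  let ?H = "\<lambda>u. (of_nat (card (EE ?P p n u)) :: rat)"
  have A: "pf (\<lambda>k. \<Sum>i<k. ?H (2*i) + ?H (2*i+1))"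
    by (intro pf_antidiff pf_add) (use Suc.IH in auto)
  have e0: "ok ?P p n (2*k) (2*k) = ok ?P p n 0 0" for k using ok_diag[of b p n "2*k"] by simp
  have e1: "ok ?P p n (2*k+1) (2*k+1) = ok ?P p n 1 1" for k using ok_diag[of b p n "2*k+1"] by simp
  have "pf (\<lambda>k. (\<Sum>i<k. ?H (2*i) + ?H (2*i+1)) + (if ok ?P p n 0 0 then ?H (2*k) else 0))"
    using A Suc.IH by (cases "ok ?P p n 0 0") (auto intro: pf_add pf_const)
  moreover have "pf (\<lambda>k. (\<Sum>i<k. ?H (2*i) + ?H (2*i+1)) + ?H (2*k) + (if ok ?P p n 1 1 then ?H (2*k+1) else 0))"
    using A Suc.IH by (cases "ok ?P p n 1 1") (auto intro: pf_add pf_const)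
  ultimately show ?case
  proof (intro conjI)
    assume h: "pf (\<lambda>k. (\<Sum>i<k. ?H (2*i) + ?H (2*i+1)) + (if ok ?P p n 0 0 then ?H (2*k) else 0))"
    show "pf (\<lambda>k. of_nat (card (EE ?P p (Suc n) (2*k))))"
    proof (rule pf_cong[OF h])
      fix k
      have "card (EE ?P p (Suc n) (2*k)) = (\<Sum>u<2*k. card (EE ?P p n u)) + (if ok ?P p n 0 0 then card (EE ?P p n (2*k)) else 0)"
        by (simp only: EE_Suc'[OF Suc.hyps] e0)
      then show "(\<Sum>i<k. ?H (2*i) + ?H (2*i+1)) + (if ok ?P p n 0 0 then ?H (2*k) else 0) = of_nat (card (EE ?P p (Suc n) (2*k)))"
        by (simp add: sum_double of_nat_sum)
    qed
  next
    assume h: "pf (\<lambda>k. (\<Sum>i<k. ?H (2*i) + ?H (2*i+1)) + ?H (2*k) + (if ok ?P p n 1 1 then ?H (2*k+1) else 0))"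
    show "pf (\<lambda>k. of_nat (card (EE ?P p (Suc n) (2*k+1))))"
    proof (rule pf_cong[OF h])
      fix k
      have "card (EE ?P p (Suc n) (2*k+1)) = (\<Sum>u<2*k+1. card (EE ?P p n u)) + (if ok ?P p n 1 1 then card (EE ?P p n (2*k+1)) else 0)"
        by (simp only: EE_Suc'[OF Suc.hyps] e1)
      then show "(\<Sum>i<k. ?H (2*i) + ?H (2*i+1)) + ?H (2*k) + (if ok ?P p n 1 1 then ?H (2*k+1) else 0) = of_nat (card (EE ?P p (Suc n) (2*k+1)))"
        by (simp only: sum_double1 of_nat_add of_nat_sum) simp
    qed
  qed
qed

lemma pf_Ncount:
  assumes "1 \<le> n"
  shows "pf (\<lambda>k. of_nat (Ncount n (2*k+1) (\<lambda>z. even z = b) p))"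
proof -
  let ?P = "\<lambda>z. even z = b"
  let ?H = "\<lambda>u. (of_nat (card (EE ?P p n u)) :: rat)"
  have "pf (\<lambda>k. (\<Sum>i<k. ?H (2*i) + ?H (2*i+1)) + ?H (2*k))"
    using pf_EE[OF assms, of b p] by (intro pf_add pf_antidiff) auto
  then show ?thesis
    by (rule pf_cong) (simp only: Ncount_split[OF assms] sum_double1 of_nat_add of_nat_sum)
qed

lemma poly_unique:
  fixes q1 q2 :: "rat poly"
  assumes "\<forall>k\<ge>1. poly q1 (of_nat k) = poly q2 (of_nat k)"
  shows "q1 = q2"
proof (rule ccontr)
  assume "q1 \<noteq> q2"
  then have "q1 - q2 \<noteq> 0" by simp
  then have fin: "finite {x. poly (q1 - q2) x = 0}" by (rule poly_roots_finite)
  have "of_nat ` {1..} \<subseteq> {x. poly (q1 - q2) x = 0}" using assms by auto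
  moreover have "infinite (of_nat ` {1..} :: rat set)"
  proof
    assume "finite (of_nat ` {1..} :: rat set)"
    then have "finite ({1..} :: nat set)" by (rule finite_imageD) (auto simp: inj_on_def)
    then show False using infinite_Ici by blast
  qed
  ultimately show False using fin finite_subset by blast
qed

lemma even_eq: "even = (\<lambda>z::nat. even z = True)" and odd_eq: "odd = (\<lambda>z::nat. even z = False)"
  by auto

lemma Omega_l_poly_eval:
  assumes "1 \<le> n" "1 \<le> k"
  shows "poly (Omega_l_poly n p) (of_nat k) = of_nat (Ncount n (2*k+1) even p)"
proof -
  obtain q :: "rat poly" where q: "\<And>k. of_nat (Ncount n (2*k+1) even p) = poly q (of_nat k)"
    using pf_Ncount[OF assms(1), of True p] unfolding pf_def even_eq[symmetric] by blast
  have "Omega_l_poly n p = q" unfolding Omega_l_poly_def Omega_l_def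
    by (rule the_equality) (use q poly_unique in auto)
  then show ?thesis using q by simp
qed

lemma Omega_r_poly_eval:
  assumes "1 \<le> n" "1 \<le> k"
  shows "poly (Omega_r_poly n p) (of_nat k) = of_nat (Ncount n (2*k+1) odd p)"
proof -
  obtain q :: "rat poly" where q: "\<And>k. of_nat (Ncount n (2*k+1) odd p) = poly q (of_nat k)"
    using pf_Ncount[OF assms(1), of False p] unfolding pf_def odd_eq[symmetric] by blast
  have "Omega_r_poly n p = q" unfolding Omega_r_poly_def Omega_r_def
    by (rule the_equality) (use q poly_unique in auto)
  then show ?thesis using q by simp
qed



definition ltv :: "(nat \<Rightarrow> bool) \<Rightarrow> (nat \<Rightarrow> nat) \<Rightarrow> nat \<Rightarrow> nat \<Rightarrow> bool" where
  "ltv P w i j \<longleftrightarrow> w i < w j \<or> (w i = w j \<and> (P (w i) \<longrightarrow> i < j) \<and> (\<not> P (w i) \<longrightarrow> j < i))"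

lemma ltv_irrefl: "\<not> ltv P w i i" unfolding ltv_def by auto
lemma ltv_asym: "ltv P w i j \<Longrightarrow> \<not> ltv P w j i" unfolding ltv_def by auto
lemma ltv_trans: "ltv P w i j \<Longrightarrow> ltv P w j k \<Longrightarrow> ltv P w i k" unfolding ltv_def by auto
lemma ltv_total: "i \<noteq> j \<Longrightarrow> ltv P w i j \<or> ltv P w j i" unfolding ltv_def by auto

definition sorts :: "nat \<Rightarrow> (nat \<Rightarrow> bool) \<Rightarrow> (nat \<Rightarrow> nat) \<Rightarrow> (nat \<Rightarrow> nat) \<Rightarrow> bool" where
  "sorts n P w p \<longleftrightarrow> p \<in> Sn n \<and> (\<forall>s\<in>{1..<n}. ltv P w (p s) (p (Suc s)))"

lemma step_iff: "(i::nat) \<noteq> j \<Longrightarrow> (x \<le> (y::nat) \<and> (i < j \<longrightarrow> x < y \<or> (x = y \<and> P x)) \<and> (j < i \<longrightarrow> x < y \<or> (x = y \<and> \<not> P x)))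
   \<longleftrightarrow> (x < y \<or> (x = y \<and> (P x \<longrightarrow> i < j) \<and> (\<not> P x \<longrightarrow> j < i)))"
  by (cases "i < j") auto

lemma valid_iff:
  assumes "p \<in> Sn n"
  shows "valid n P p (w \<circ> p) \<longleftrightarrow> (\<forall>s\<in>{1..<n}. ltv P w (p s) (p (Suc s)))"
proof -
  have perm: "p permutes {1..n}" using assms by (simp add: Sn_def)
  have ne: "p s \<noteq> p (Suc s)" for s using permutes_inj[OF perm] by (auto dest: injD)
  have "valid n P p (w \<circ> p) \<longleftrightarrow> (\<forall>s\<in>{1..<n}. w (p s) \<le> w (p (Suc s)) \<and>
      (p s < p (Suc s) \<longrightarrow> (w (p s) < w (p (Suc s)) \<or> (w (p s) = w (p (Suc s)) \<and> P (w (p s))))) \<and>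
      (p (Suc s) < p s \<longrightarrow> (w (p s) < w (p (Suc s)) \<or> (w (p s) = w (p (Suc s)) \<and> \<not> P (w (p s))))))"
    unfolding valid_def o_def by blast
  also have "\<dots> \<longleftrightarrow> (\<forall>s\<in>{1..<n}. ltv P w (p s) (p (Suc s)))"
    unfolding ltv_def by (intro ball_cong refl step_iff ne)
  finally show ?thesis .
qed

lemma sorts_all:
  assumes "sorts n P w p" "1 \<le> s" "s < t" "t \<le> n"
  shows "ltv P w (p s) (p t)"
  using assms(3,4)
proof (induction t rule: less_induct)
  case (less t)
  then obtain t' where t: "t = Suc t'" by (cases t) auto
  have step: "ltv P w (p t') (p t)" using assms(1,2) less.prems t unfolding sorts_def by auto
  show ?case
  proof (cases "s = t'")
    case True then show ?thesis using step t by simp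
  next
    case False
    then have "ltv P w (p s) (p t')" using less.IH[of t'] less.prems t by auto
    then show ?thesis using step ltv_trans by blast
  qed
qed

definition rk :: "nat \<Rightarrow> (nat \<Rightarrow> bool) \<Rightarrow> (nat \<Rightarrow> nat) \<Rightarrow> nat \<Rightarrow> nat" where
  "rk n P w i = card {j \<in> {1..n}. ltv P w j i}"

lemma rk_less:
  assumes h: "ltv P w i j" "j \<in> {1..n}" "i \<in> {1..n}"
  shows "rk n P w i < rk n P w j"
  unfolding rk_def
proof (rule psubset_card_mono)
  show "finite {k \<in> {1..n}. ltv P w k j}" by simp
  have "{k \<in> {1..n}. ltv P w k i} \<subseteq> {k \<in> {1..n}. ltv P w k j}" using h ltv_trans by blast
  moreover have "i \<in> {k \<in> {1..n}. ltv P w k j}" using h by simp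
  moreover have "i \<notin> {k \<in> {1..n}. ltv P w k i}" using ltv_irrefl by simp
  ultimately show "{k \<in> {1..n}. ltv P w k i} \<subset> {k \<in> {1..n}. ltv P w k j}" by blast
qed

lemma rk_inj: "inj_on (rk n P w) {1..n}"
proof (rule inj_onI)
  fix i j assume "i \<in> {1..n}" "j \<in> {1..n}" "rk n P w i = rk n P w j"
  then show "i = j" using rk_less[of P w i j n] rk_less[of P w j i n] ltv_total[of i j P w] by fastforce
qed

lemma rk_bound: "i \<in> {1..n} \<Longrightarrow> rk n P w i < n"
proof -
  assume i: "i \<in> {1..n}"
  have "{j \<in> {1..n}. ltv P w j i} \<subset> {1..n}" using i ltv_irrefl by fastforce
  then have "card {j \<in> {1..n}. ltv P w j i} < card {1..n}" by (rule psubset_card_mono[OF finite_atLeastAtMost])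
  then show ?thesis unfolding rk_def by simp
qed

lemma rk_sorted:
  assumes "sorts n P w p" "t \<in> {1..n}"
  shows "rk n P w (p t) = t - 1"
proof -
  have perm: "p permutes {1..n}" using assms(1) by (simp add: sorts_def Sn_def)
  have "{j \<in> {1..n}. ltv P w j (p t)} = p ` {1..<t}"
  proof (intro equalityI subsetI)
    fix j assume j: "j \<in> {j \<in> {1..n}. ltv P w j (p t)}"
    have "j = p (inv p j)" using permutes_inverses(1)[OF perm] by simp
    have "inv p j \<in> {1..n}" using j permutes_in_image[OF permutes_inv[OF perm]] by simp
    moreover have "inv p j < t"
    proof (rule ccontr)
      assume "\<not> inv p j < t"
      moreover have "inv p j \<noteq> t"
      proof
        assume "inv p j = t"
        then have "j = p t" using \<open>j = p (inv p j)\<close> by simp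
        then show False using j ltv_irrefl by simp
      qed
      ultimately have "t < inv p j" by simp
      then have "ltv P w (p t) (p (inv p j))" using sorts_all[OF assms(1)] assms(2) \<open>inv p j \<in> {1..n}\<close> by auto
      moreover have "ltv P w (p (inv p j)) (p t)" using j \<open>j = p (inv p j)\<close> by simp
      ultimately show False using ltv_asym by blast
    qed
    ultimately show "j \<in> p ` {1..<t}" using \<open>j = p (inv p j)\<close> by (intro image_eqI[of j p "inv p j"]) auto
  next
    fix j assume "j \<in> p ` {1..<t}"
    then obtain s where s: "s \<in> {1..<t}" "j = p s" by auto
    then show "j \<in> {j \<in> {1..n}. ltv P w j (p t)}"
      using sorts_all[OF assms(1), of s t] assms(2) permutes_in_image[OF perm, of s] by auto
  qed
  moreover have "inj_on p {1..<t}" using permutes_inj[OF perm] by (auto simp: inj_on_def inj_def)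
  ultimately show ?thesis unfolding rk_def by (simp add: card_image)
qed

lemma sorts_unique:
  assumes "sorts n P w p1" "sorts n P w p2" shows "p1 = p2"
proof
  fix t
  have perm1: "p1 permutes {1..n}" and perm2: "p2 permutes {1..n}" using assms by (auto simp: sorts_def Sn_def)
  show "p1 t = p2 t"
  proof (cases "t \<in> {1..n}")
    case True
    then have "rk n P w (p1 t) = rk n P w (p2 t)" using rk_sorted assms by simp
    moreover have "p1 t \<in> {1..n}" "p2 t \<in> {1..n}"
      using True permutes_in_image[OF perm1] permutes_in_image[OF perm2] by auto
    ultimately show ?thesis using inj_onD[OF rk_inj[of n P w]] by blast
  next
    case False then show ?thesis using permutes_not_in[OF perm1] permutes_not_in[OF perm2] by simp
  qed
qed

lemma sorts_exists: "\<exists>p. sorts n P w p"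
proof -
  define q where "q = (\<lambda>i. if i \<in> {1..n} then rk n P w i + 1 else i)"
  have "inj_on q {1..n}"
  proof (rule inj_onI)
    fix i j assume "i \<in> {1..n}" "j \<in> {1..n}" "q i = q j"
    then have "rk n P w i = rk n P w j" unfolding q_def by simp
    then show "i = j" using inj_onD[OF rk_inj] \<open>i \<in> {1..n}\<close> \<open>j \<in> {1..n}\<close> by blast
  qed
  moreover have sub: "q ` {1..n} \<subseteq> {1..n}"
  proof
    fix x assume "x \<in> q ` {1..n}"
    then obtain i where i: "i \<in> {1..n}" "x = q i" by blast
    then have "x = rk n P w i + 1" unfolding q_def by simp
    moreover have "rk n P w i < n" using rk_bound[OF i(1)] .
    ultimately show "x \<in> {1..n}" by simp
  qed
  ultimately have "q ` {1..n} = {1..n}"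
    using card_subset_eq[OF finite_atLeastAtMost sub] card_image by metis
  with \<open>inj_on q {1..n}\<close> have "bij_betw q {1..n} {1..n}" by (simp add: bij_betw_def)
  then have qp: "q permutes {1..n}" by (rule bij_imp_permutes) (auto simp: q_def)
  define p where "p = inv q"
  have pp: "p permutes {1..n}" unfolding p_def by (rule permutes_inv[OF qp])
  have "ltv P w (p s) (p (Suc s))" if s: "s \<in> {1..<n}" for s
  proof -
    have in1: "p s \<in> {1..n}" "p (Suc s) \<in> {1..n}" using s permutes_in_image[OF pp] by auto
    have "q (p s) = s" "q (p (Suc s)) = Suc s" unfolding p_def using permutes_inverses[OF qp] by auto
    then have "rk n P w (p s) < rk n P w (p (Suc s))" using in1 unfolding q_def by auto
    moreover have "p s \<noteq> p (Suc s)" using permutes_inj[OF pp] by (auto dest: injD)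
    ultimately show ?thesis
    proof (cases "ltv P w (p s) (p (Suc s))")
      case False
      then have "ltv P w (p (Suc s)) (p s)" using ltv_total \<open>p s \<noteq> p (Suc s)\<close> by blast
      then have "rk n P w (p (Suc s)) < rk n P w (p s)" using rk_less in1 by blast
      then show ?thesis using \<open>rk n P w (p s) < rk n P w (p (Suc s))\<close> by simp
    qed
  qed
  then have "sorts n P w p" using pp by (simp add: sorts_def Sn_def)
  then show ?thesis by blast
qed

definition std :: "nat \<Rightarrow> (nat \<Rightarrow> bool) \<Rightarrow> (nat \<Rightarrow> nat) \<Rightarrow> (nat \<Rightarrow> nat)" where
  "std n P w = (THE p. sorts n P w p)"

lemma std_sorts: "sorts n P w (std n P w)"
proof -
  obtain p where "sorts n P w p" using sorts_exists by blast
  then show ?thesis unfolding std_def using theI[of "sorts n P w" p] sorts_unique by blast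
qed

lemma std_eq: "sorts n P w p \<Longrightarrow> std n P w = p"
  using std_sorts[of n P w] by (rule sorts_unique)

lemma std_in: "std n P w \<in> Sn n"
  using std_sorts[of n P w] unfolding sorts_def by (rule conjunct1)

lemma Ncount_std:
  assumes p: "p \<in> Sn n"
  shows "Ncount n m P p = card {w \<in> {1..n} \<rightarrow>\<^sub>E {..<m}. std n P w = p}"
proof -
  have perm: "p permutes {1..n}" using p by (simp add: Sn_def)
  have key: "std n P w = p \<longleftrightarrow> valid n P p (restrict (w \<circ> p) {1..n})" for w
  proof -
    have "valid n P p (restrict (w \<circ> p) {1..n}) = valid n P p (w \<circ> p)" by (rule valid_cong) simp
    also have "\<dots> = sorts n P w p" using valid_iff[OF p] p by (simp add: sorts_def)
    also have "\<dots> = (std n P w = p)"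
    proof
      assume "sorts n P w p" then show "std n P w = p" by (rule std_eq)
    next
      assume "std n P w = p" then show "sorts n P w p" using std_sorts[of n P w] by simp
    qed
    finally show ?thesis by simp
  qed
  let ?A = "{a \<in> {1..n} \<rightarrow>\<^sub>E {..<m}. valid n P p a}"
  let ?B = "{w \<in> {1..n} \<rightarrow>\<^sub>E {..<m}. std n P w = p}"
  have inv1: "inv p x \<in> {1..n} \<longleftrightarrow> x \<in> {1..n}" for x using permutes_in_image[OF permutes_inv[OF perm]] .
  have in1: "p x \<in> {1..n} \<longleftrightarrow> x \<in> {1..n}" for x using permutes_in_image[OF perm] .
  have pi1: "p (inv p x) = x" for x using permutes_inverses(1)[OF perm] .
  have pi2: "inv p (p x) = x" for x using permutes_inverses(2)[OF perm] .
  have l1: "restrict (restrict (a \<circ> p) {1..n} \<circ> inv p) {1..n} = a" if "a \<in> extensional {1..n}" for a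
  proof (rule extensionalityI[OF _ that])
    show "restrict (restrict (a \<circ> p) {1..n} \<circ> inv p) {1..n} \<in> extensional {1..n}" by simp
    fix x assume "x \<in> {1..n}"
    then show "restrict (restrict (a \<circ> p) {1..n} \<circ> inv p) {1..n} x = a x" using inv1 pi1 by simp
  qed
  have l2: "restrict (restrict (a \<circ> inv p) {1..n} \<circ> p) {1..n} = a" if "a \<in> extensional {1..n}" for a
  proof (rule extensionalityI[OF _ that])
    show "restrict (restrict (a \<circ> inv p) {1..n} \<circ> p) {1..n} \<in> extensional {1..n}" by simp
    fix x assume "x \<in> {1..n}"
    then show "restrict (restrict (a \<circ> inv p) {1..n} \<circ> p) {1..n} x = a x" using in1 pi2 by simp
  qed
  have m1: "restrict (a \<circ> p) {1..n} \<in> {1..n} \<rightarrow>\<^sub>E {..<m}" if "a \<in> {1..n} \<rightarrow>\<^sub>E {..<m}" for a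
  proof (rule PiE_I)
    fix x assume "x \<in> {1..n}"
    then have "p x \<in> {1..n}" using in1 by simp
    then show "restrict (a \<circ> p) {1..n} x \<in> {..<m}" using that \<open>x \<in> {1..n}\<close> by (auto simp: PiE_iff)
  qed auto
  have m2: "restrict (a \<circ> inv p) {1..n} \<in> {1..n} \<rightarrow>\<^sub>E {..<m}" if "a \<in> {1..n} \<rightarrow>\<^sub>E {..<m}" for a
  proof (rule PiE_I)
    fix x assume "x \<in> {1..n}"
    then have "inv p x \<in> {1..n}" using inv1 by simp
    then show "restrict (a \<circ> inv p) {1..n} x \<in> {..<m}" using that \<open>x \<in> {1..n}\<close> by (auto simp: PiE_iff)
  qed auto
  have "bij_betw (\<lambda>w. restrict (w \<circ> p) {1..n}) ?B ?A"
  proof (rule bij_betw_byWitness[where f' = "\<lambda>a. restrict (a \<circ> inv p) {1..n}"])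
    show "\<forall>a\<in>?B. restrict (restrict (a \<circ> p) {1..n} \<circ> inv p) {1..n} = a"
    proof
      fix a assume "a \<in> ?B"
      then have "a \<in> extensional {1..n}" by (simp add: PiE_iff)
      then show "restrict (restrict (a \<circ> p) {1..n} \<circ> inv p) {1..n} = a" by (rule l1)
    qed
    show "\<forall>a\<in>?A. restrict (restrict (a \<circ> inv p) {1..n} \<circ> p) {1..n} = a"
    proof
      fix a assume "a \<in> ?A"
      then have "a \<in> extensional {1..n}" by (simp add: PiE_iff)
      then show "restrict (restrict (a \<circ> inv p) {1..n} \<circ> p) {1..n} = a" by (rule l2)
    qed
    show "(\<lambda>w. restrict (w \<circ> p) {1..n}) ` ?B \<subseteq> ?A"
    proof
      fix a assume "a \<in> (\<lambda>w. restrict (w \<circ> p) {1..n}) ` ?B"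
      then obtain w where w: "w \<in> ?B" "a = restrict (w \<circ> p) {1..n}" by blast
      then have "a \<in> {1..n} \<rightarrow>\<^sub>E {..<m}" using m1 by simp
      moreover have "valid n P p a" using w key by simp
      ultimately show "a \<in> ?A" by simp
    qed
    show "(\<lambda>a. restrict (a \<circ> inv p) {1..n}) ` ?A \<subseteq> ?B"
    proof
      fix w assume "w \<in> (\<lambda>a. restrict (a \<circ> inv p) {1..n}) ` ?A"
      then obtain a where a: "a \<in> ?A" "w = restrict (a \<circ> inv p) {1..n}" by auto
      have "a \<in> extensional {1..n}" using a by (simp add: PiE_iff)
      then have "restrict (w \<circ> p) {1..n} = a" using a(2) l2 by simp
      then have "std n P w = p" using key a by simp
      moreover have "w \<in> {1..n} \<rightarrow>\<^sub>E {..<m}" using a m2 by simp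
      ultimately show "w \<in> ?B" by simp
    qed
  qed
  then show ?thesis unfolding Ncount_valid by (simp add: bij_betw_same_card)
qed



definition fl :: "nat \<Rightarrow> bool \<Rightarrow> nat \<Rightarrow> nat" where
  "fl m b y = (if b then y else m - 1 - y)"

definition comb :: "nat \<Rightarrow> (nat \<Rightarrow> bool) \<Rightarrow> nat \<Rightarrow> nat \<Rightarrow> nat" where
  "comb m P2 x y = x * m + fl m (P2 x) y"

definition dz1 :: "nat \<Rightarrow> (nat \<Rightarrow> bool) \<Rightarrow> nat \<Rightarrow> nat" where
  "dz1 m P2 z = fl m (P2 (z div m)) (z mod m)"

definition P12 :: "nat \<Rightarrow> (nat \<Rightarrow> bool) \<Rightarrow> (nat \<Rightarrow> bool) \<Rightarrow> nat \<Rightarrow> bool" where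
  "P12 m P1 P2 z \<longleftrightarrow> (P2 (z div m) = P1 (dz1 m P2 z))"

definition ltz :: "(nat \<Rightarrow> bool) \<Rightarrow> nat \<Rightarrow> nat \<Rightarrow> nat \<Rightarrow> nat \<Rightarrow> bool" where
  "ltz P a b i j \<longleftrightarrow> a < b \<or> (a = b \<and> (P a \<longrightarrow> i < j) \<and> (\<not> P a \<longrightarrow> j < i))"

lemma ltv_ltz: "ltv P w i j = ltz P (w i) (w j) i j"
  unfolding ltv_def ltz_def by simp

lemma fl_less: "y < m \<Longrightarrow> fl m b y < m"
  unfolding fl_def by auto

lemma fl_fl: "y < m \<Longrightarrow> fl m b (fl m b y) = y"
  unfolding fl_def by auto

lemma lex_lt:
  fixes a b x x' m :: nat
  assumes "a < m" "b < m"
  shows "x * m + a < x' * m + b \<longleftrightarrow> x < x' \<or> (x = x' \<and> a < b)"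
proof
  assume h: "x * m + a < x' * m + b"
  show "x < x' \<or> (x = x' \<and> a < b)"
  proof (rule ccontr)
    assume "\<not> (x < x' \<or> (x = x' \<and> a < b))"
    then have "x' < x \<or> (x = x' \<and> b \<le> a)" by auto
    then show False
    proof
      assume "x' < x"
      then have "Suc x' * m \<le> x * m" by (intro mult_le_mono1) simp
      then have "x' * m + m \<le> x * m" by simp
      then show False using h assms(2) by linarith
    next
      assume "x = x' \<and> b \<le> a" then show False using h by simp
    qed
  qed
next
  assume "x < x' \<or> (x = x' \<and> a < b)"
  then show "x * m + a < x' * m + b"
  proof
    assume "x < x'"
    then have "Suc x * m \<le> x' * m" by (intro mult_le_mono1) simp
    then have "x * m + m \<le> x' * m" by simp
    then show ?thesis using assms(1) by linarith
  next
    assume "x = x' \<and> a < b" then show ?thesis by simp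
  qed
qed

lemma lex_eq:
  fixes a b x x' m :: nat
  assumes "a < m" "b < m"
  shows "x * m + a = x' * m + b \<longleftrightarrow> x = x' \<and> a = b"
  using lex_lt[OF assms, of x x'] lex_lt[OF assms(2,1), of x' x] by auto

lemma comb_div: "y < m \<Longrightarrow> comb m P2 x y div m = x"
  unfolding comb_def using fl_less[of y m "P2 x"] by simp

lemma comb_mod: "y < m \<Longrightarrow> comb m P2 x y mod m = fl m (P2 x) y"
  unfolding comb_def using fl_less[of y m "P2 x"] by simp

lemma dz1_comb: "y < m \<Longrightarrow> dz1 m P2 (comb m P2 x y) = y"
  unfolding dz1_def by (simp add: comb_div comb_mod fl_fl)

lemma comb_dz: "0 < m \<Longrightarrow> comb m P2 (z div m) (dz1 m P2 z) = z"
  unfolding comb_def dz1_def by (simp add: fl_fl)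

lemma dz1_less: "0 < m \<Longrightarrow> dz1 m P2 z < m"
  unfolding dz1_def by (simp add: fl_less)

lemma comb_less:
  assumes "y < m" "x < m2" shows "comb m P2 x y < m2 * m"
proof -
  have "Suc x * m \<le> m2 * m" using assms(2) by (intro mult_le_mono1) simp
  then have "x * m + m \<le> m2 * m" by simp
  moreover have "fl m (P2 x) y < m" using fl_less assms(1) by blast
  ultimately show ?thesis unfolding comb_def by linarith
qed

lemma P12_comb: "y < m \<Longrightarrow> P12 m P1 P2 (comb m P2 x y) = (P2 x = P1 y)"
  unfolding P12_def by (simp add: comb_div dz1_comb)

lemma comb_lt:
  assumes y: "y < m" and y': "y' < m"
  shows "ltz (P12 m P1 P2) (comb m P2 x y) (comb m P2 x' y') i j \<longleftrightarrow>
    x < x' \<or> (x = x' \<and> (P2 x \<longrightarrow> ltz P1 y y' i j) \<and> (\<not> P2 x \<longrightarrow> ltz P1 y' y j i))"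
proof -
  have fy: "fl m b y < m" "fl m b y' < m" for b using fl_less y y' by auto
  have lt: "comb m P2 x y < comb m P2 x' y' \<longleftrightarrow> x < x' \<or> (x = x' \<and> fl m (P2 x) y < fl m (P2 x) y')"
    unfolding comb_def using lex_lt[OF fy(1) fy(2)] by auto
  have eq: "comb m P2 x y = comb m P2 x' y' \<longleftrightarrow> x = x' \<and> y = y'"
    unfolding comb_def using lex_eq[OF fy(1) fy(2)] fl_fl y y' by metis
  have flt: "fl m b y < fl m b y' \<longleftrightarrow> (if b then y < y' else y' < y)" for b
    unfolding fl_def using y y' by auto
  show ?thesis
    unfolding ltz_def lt eq P12_comb[OF y] flt by auto
qed



lemma finite_Sn: "finite (Sn n)"
  unfolding Sn_def by (rule finite_permutations) simp

lemma sorts_iff: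
  assumes "sorts n P w \<sigma>" "t \<in> {1..n}" "t' \<in> {1..n}" "t \<noteq> t'"
  shows "ltv P w (\<sigma> t) (\<sigma> t') \<longleftrightarrow> t < t'"
proof (cases "t < t'")
  case True then show ?thesis using sorts_all[OF assms(1), of t t'] assms by simp
next
  case False
  then have "t' < t" using assms(4) by simp
  then have "ltv P w (\<sigma> t') (\<sigma> t)" using sorts_all[OF assms(1), of t' t] assms by simp
  then show ?thesis using ltv_asym False by blast
qed

definition Phi :: "nat \<Rightarrow> nat \<Rightarrow> (nat \<Rightarrow> bool) \<Rightarrow> (nat \<Rightarrow> bool) \<Rightarrow> (nat \<Rightarrow> nat) \<times> (nat \<Rightarrow> nat) \<Rightarrow> (nat \<Rightarrow> nat)" where
  "Phi n m1 P1 P2 ww = restrict (\<lambda>i. comb m1 P2 (snd ww (inv (std n P1 (fst ww)) i)) (fst ww i)) {1..n}"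

definition Psi :: "nat \<Rightarrow> nat \<Rightarrow> (nat \<Rightarrow> bool) \<Rightarrow> (nat \<Rightarrow> bool) \<Rightarrow> (nat \<Rightarrow> nat) \<Rightarrow> (nat \<Rightarrow> nat) \<times> (nat \<Rightarrow> nat)" where
  "Psi n m1 P1 P2 w = (restrict (\<lambda>i. dz1 m1 P2 (w i)) {1..n},
      restrict (\<lambda>j. w (std n P1 (restrict (\<lambda>i. dz1 m1 P2 (w i)) {1..n}) j) div m1) {1..n})"

lemma std_perm: "std n P w permutes {1..n}"
  using std_in[of n P w] by (simp add: Sn_def)

lemma std_Phi:
  assumes w1: "w1 \<in> {1..n} \<rightarrow>\<^sub>E {..<m1}"
  shows "std n (P12 m1 P1 P2) (Phi n m1 P1 P2 (w1, w2)) = std n P1 w1 \<circ> std n P2 w2"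
proof (rule std_eq)
  let ?\<sigma> = "std n P1 w1" and ?\<tau> = "std n P2 w2"
  let ?W = "Phi n m1 P1 P2 (w1, w2)"
  have ps: "?\<sigma> permutes {1..n}" and pt: "?\<tau> permutes {1..n}" by (rule std_perm)+
  have "?\<sigma> \<circ> ?\<tau> \<in> Sn n" unfolding Sn_def using permutes_compose[OF pt ps] by simp
  moreover have "ltv (P12 m1 P1 P2) ?W ((?\<sigma> \<circ> ?\<tau>) s) ((?\<sigma> \<circ> ?\<tau>) (Suc s))" if s: "s \<in> {1..<n}" for s
  proof -
    define t where "t = ?\<tau> s"
    define t' where "t' = ?\<tau> (Suc s)"
    have tt: "t \<in> {1..n}" "t' \<in> {1..n}" unfolding t_def t'_def using s permutes_in_image[OF pt] by auto
    have tne: "t \<noteq> t'" unfolding t_def t'_def using permutes_inj[OF pt] by (auto dest: injD)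
    have ii: "?\<sigma> t \<in> {1..n}" "?\<sigma> t' \<in> {1..n}" using tt permutes_in_image[OF ps] by auto
    have W1: "?W (?\<sigma> t) = comb m1 P2 (w2 t) (w1 (?\<sigma> t))"
      unfolding Phi_def using ii permutes_inverses(2)[OF ps] by simp
    have W2: "?W (?\<sigma> t') = comb m1 P2 (w2 t') (w1 (?\<sigma> t'))"
      unfolding Phi_def using ii permutes_inverses(2)[OF ps] by simp
    have lt1: "w1 (?\<sigma> t) < m1" "w1 (?\<sigma> t') < m1" using w1 ii by (auto simp: PiE_iff)
    have o1: "ltz P1 (w1 (?\<sigma> t)) (w1 (?\<sigma> t')) (?\<sigma> t) (?\<sigma> t') \<longleftrightarrow> t < t'"
      using sorts_iff[OF std_sorts tt tne] by (simp add: ltv_ltz)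
    have o2: "ltz P1 (w1 (?\<sigma> t')) (w1 (?\<sigma> t)) (?\<sigma> t') (?\<sigma> t) \<longleftrightarrow> t' < t"
      using sorts_iff[OF std_sorts tt(2,1)] tne by (simp add: ltv_ltz)
    have "ltv P2 w2 t t'" unfolding t_def t'_def using std_sorts[of n P2 w2] s by (simp add: sorts_def)
    then have "ltz P2 (w2 t) (w2 t') t t'" by (simp add: ltv_ltz)
    then have "ltz (P12 m1 P1 P2) (?W (?\<sigma> t)) (?W (?\<sigma> t')) (?\<sigma> t) (?\<sigma> t')"
      unfolding W1 W2 comb_lt[OF lt1] o1 o2 by (simp add: ltz_def)
    then show ?thesis unfolding t_def t'_def by (simp add: ltv_ltz)
  qed
  ultimately show "sorts n (P12 m1 P1 P2) ?W (?\<sigma> \<circ> ?\<tau>)" unfolding sorts_def by blast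
qed


lemma Psi_Phi:
  assumes "0 < m1" "w1 \<in> {1..n} \<rightarrow>\<^sub>E {..<m1}" "w2 \<in> {1..n} \<rightarrow>\<^sub>E {..<m2}"
  shows "Psi n m1 P1 P2 (Phi n m1 P1 P2 (w1, w2)) = (w1, w2)"
proof -
  let ?W = "Phi n m1 P1 P2 (w1, w2)"
  let ?\<sigma> = "std n P1 w1"
  have ps: "?\<sigma> permutes {1..n}" by (rule std_perm)
  have f: "restrict (\<lambda>i. dz1 m1 P2 (?W i)) {1..n} = w1"
  proof (rule extensionalityI[of _ "{1..n}"])
    show "w1 \<in> extensional {1..n}" using assms(2) by (simp add: PiE_iff)
    fix i assume i: "i \<in> {1..n}"
    then have "w1 i < m1" using assms(2) by (auto simp: PiE_iff)
    then show "restrict (\<lambda>i. dz1 m1 P2 (?W i)) {1..n} i = w1 i"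
      using i unfolding Phi_def by (simp add: dz1_comb)
  qed simp
  have g: "restrict (\<lambda>j. ?W (?\<sigma> j) div m1) {1..n} = w2"
  proof (rule extensionalityI[of _ "{1..n}"])
    show "w2 \<in> extensional {1..n}" using assms(3) by (simp add: PiE_iff)
    fix j assume j: "j \<in> {1..n}"
    then have sj: "?\<sigma> j \<in> {1..n}" using permutes_in_image[OF ps] by simp
    then have "w1 (?\<sigma> j) < m1" using assms(2) by (auto simp: PiE_iff)
    then show "restrict (\<lambda>j. ?W (?\<sigma> j) div m1) {1..n} j = w2 j"
      using j sj permutes_inverses(2)[OF ps] unfolding Phi_def by (simp add: comb_div)
  qed simp
  show ?thesis unfolding Psi_def f g by simp
qed

lemma Phi_Psi:
  assumes "0 < m1" "w \<in> {1..n} \<rightarrow>\<^sub>E {..<m2*m1}"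
  shows "Phi n m1 P1 P2 (Psi n m1 P1 P2 w) = w"
proof -
  define w1 where "w1 = restrict (\<lambda>i. dz1 m1 P2 (w i)) {1..n}"
  let ?\<sigma> = "std n P1 w1"
  have ps: "?\<sigma> permutes {1..n}" by (rule std_perm)
  have e: "Psi n m1 P1 P2 w = (w1, restrict (\<lambda>j. w (?\<sigma> j) div m1) {1..n})"
    unfolding Psi_def w1_def by simp
  show ?thesis unfolding e
  proof (rule extensionalityI[of _ "{1..n}"])
    show "w \<in> extensional {1..n}" using assms(2) by (simp add: PiE_iff)
    fix i assume i: "i \<in> {1..n}"
    then have "inv ?\<sigma> i \<in> {1..n}" using permutes_in_image[OF permutes_inv[OF ps]] by simp
    then show "Phi n m1 P1 P2 (w1, restrict (\<lambda>j. w (?\<sigma> j) div m1) {1..n}) i = w i"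
      using i permutes_inverses(1)[OF ps] comb_dz[OF assms(1)] unfolding Phi_def w1_def[symmetric]
      by (simp add: w1_def)
  qed (simp add: Phi_def)
qed

lemma Phi_bij:
  assumes "0 < m1"
  shows "bij_betw (Phi n m1 P1 P2) (({1..n} \<rightarrow>\<^sub>E {..<m1}) \<times> ({1..n} \<rightarrow>\<^sub>E {..<m2})) ({1..n} \<rightarrow>\<^sub>E {..<m2*m1})"
proof (rule bij_betw_byWitness[where f' = "Psi n m1 P1 P2"])
  show "\<forall>a\<in>({1..n} \<rightarrow>\<^sub>E {..<m1}) \<times> ({1..n} \<rightarrow>\<^sub>E {..<m2}). Psi n m1 P1 P2 (Phi n m1 P1 P2 a) = a"
    using Psi_Phi[OF assms] by auto
  show "\<forall>a\<in>{1..n} \<rightarrow>\<^sub>E {..<m2*m1}. Phi n m1 P1 P2 (Psi n m1 P1 P2 a) = a"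
    using Phi_Psi[OF assms] by auto
  show "Phi n m1 P1 P2 ` (({1..n} \<rightarrow>\<^sub>E {..<m1}) \<times> ({1..n} \<rightarrow>\<^sub>E {..<m2})) \<subseteq> {1..n} \<rightarrow>\<^sub>E {..<m2*m1}"
  proof
    fix w assume "w \<in> Phi n m1 P1 P2 ` (({1..n} \<rightarrow>\<^sub>E {..<m1}) \<times> ({1..n} \<rightarrow>\<^sub>E {..<m2}))"
    then obtain w1 w2 where w: "w1 \<in> {1..n} \<rightarrow>\<^sub>E {..<m1}" "w2 \<in> {1..n} \<rightarrow>\<^sub>E {..<m2}" "w = Phi n m1 P1 P2 (w1, w2)"
      by auto
    let ?\<sigma> = "std n P1 w1"
    have ps: "?\<sigma> permutes {1..n}" by (rule std_perm)
    show "w \<in> {1..n} \<rightarrow>\<^sub>E {..<m2*m1}"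
    proof (rule PiE_I)
      fix i assume i: "i \<in> {1..n}"
      then have "inv ?\<sigma> i \<in> {1..n}" using permutes_in_image[OF permutes_inv[OF ps]] by simp
      then have a: "w2 (inv ?\<sigma> i) < m2" using w(2) by (auto simp: PiE_iff)
      have b: "w1 i < m1" using w(1) i by (auto simp: PiE_iff)
      show "w i \<in> {..<m2*m1}" using comb_less[OF b a, of P2] i unfolding w(3) Phi_def by simp
    next
      fix i assume "i \<notin> {1..n}" then show "w i = undefined" unfolding w(3) Phi_def by auto
    qed
  qed
  show "Psi n m1 P1 P2 ` ({1..n} \<rightarrow>\<^sub>E {..<m2*m1}) \<subseteq> ({1..n} \<rightarrow>\<^sub>E {..<m1}) \<times> ({1..n} \<rightarrow>\<^sub>E {..<m2})"
  proof
    fix ww assume "ww \<in> Psi n m1 P1 P2 ` ({1..n} \<rightarrow>\<^sub>E {..<m2*m1})"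
    then obtain w where w: "w \<in> {1..n} \<rightarrow>\<^sub>E {..<m2*m1}" "ww = Psi n m1 P1 P2 w" by auto
    define w1 where "w1 = restrict (\<lambda>i. dz1 m1 P2 (w i)) {1..n}"
    let ?\<sigma> = "std n P1 w1"
    have ps: "?\<sigma> permutes {1..n}" by (rule std_perm)
    have e: "ww = (w1, restrict (\<lambda>j. w (?\<sigma> j) div m1) {1..n})"
      unfolding w(2) Psi_def w1_def by simp
    have "w1 \<in> {1..n} \<rightarrow>\<^sub>E {..<m1}" unfolding w1_def using dz1_less[OF assms] by auto
    moreover have "restrict (\<lambda>j. w (?\<sigma> j) div m1) {1..n} \<in> {1..n} \<rightarrow>\<^sub>E {..<m2}"
    proof (rule PiE_I)
      fix j assume "j \<in> {1..n}"
      then have "?\<sigma> j \<in> {1..n}" using permutes_in_image[OF ps] by simp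
      then have "w (?\<sigma> j) < m2 * m1" using w(1) by (auto simp: PiE_iff)
      then have "w (?\<sigma> j) div m1 < m2" by (simp add: less_mult_imp_div_less)
      then show "restrict (\<lambda>j. w (?\<sigma> j) div m1) {1..n} j \<in> {..<m2}" using \<open>j \<in> {1..n}\<close> by simp
    qed auto
    ultimately show "ww \<in> ({1..n} \<rightarrow>\<^sub>E {..<m1}) \<times> ({1..n} \<rightarrow>\<^sub>E {..<m2})" unfolding e by simp
  qed
qed

lemma card_fiber:
  assumes "bij_betw f A B"
  shows "card {b \<in> B. g b = p} = card {a \<in> A. g (f a) = p}"
proof -
  have "{b \<in> B. g b = p} = f ` {a \<in> A. g (f a) = p}"
    using assms unfolding bij_betw_def by auto
  moreover have "inj_on f A" using assms by (simp add: bij_betw_def)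
  then have "inj_on f {a \<in> A. g (f a) = p}" by (rule inj_on_subset) auto
  ultimately show ?thesis by (simp add: card_image)
qed



lemma prod_count:
  assumes m1: "0 < m1" and p: "p \<in> Sn n"
  shows "Ncount n (m2*m1) (P12 m1 P1 P2) p =
    (\<Sum>s\<in>Sn n. \<Sum>t\<in>Sn n. if s \<circ> t = p then Ncount n m1 P1 s * Ncount n m2 P2 t else 0)"
proof -
  let ?E1 = "{1..n} \<rightarrow>\<^sub>E {..<m1}" and ?E2 = "{1..n} \<rightarrow>\<^sub>E {..<m2}"
  define A where "A s = {w \<in> ?E1. std n P1 w = s}" for s
  define B where "B t = {w \<in> ?E2. std n P2 w = t}" for t
  have finA: "finite (A s)" for s unfolding A_def by (rule finite_subset[of _ "{1..n} \<rightarrow>\<^sub>E {..<m1}"]) (auto intro: finite_PiE)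
  have finB: "finite (B t)" for t unfolding B_def by (rule finite_subset[of _ "{1..n} \<rightarrow>\<^sub>E {..<m2}"]) (auto intro: finite_PiE)
  have "Ncount n (m2*m1) (P12 m1 P1 P2) p = card {w \<in> {1..n} \<rightarrow>\<^sub>E {..<m2*m1}. std n (P12 m1 P1 P2) w = p}"
    by (rule Ncount_std[OF p])
  also have "\<dots> = card {ww \<in> ?E1 \<times> ?E2. std n (P12 m1 P1 P2) (Phi n m1 P1 P2 ww) = p}"
    by (rule card_fiber[OF Phi_bij[OF m1]])
  also have "{ww \<in> ?E1 \<times> ?E2. std n (P12 m1 P1 P2) (Phi n m1 P1 P2 ww) = p} =
      (\<Union>s\<in>Sn n. \<Union>t\<in>{t \<in> Sn n. s \<circ> t = p}. A s \<times> B t)"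
  proof (intro equalityI subsetI)
    fix ww assume ww: "ww \<in> {ww \<in> ?E1 \<times> ?E2. std n (P12 m1 P1 P2) (Phi n m1 P1 P2 ww) = p}"
    obtain a b where ab: "ww = (a, b)" by (cases ww)
    have a: "a \<in> ?E1" and b: "b \<in> ?E2" using ww ab by auto
    have "std n P1 a \<circ> std n P2 b = p" using ww ab std_Phi[OF a] by simp
    moreover have "a \<in> A (std n P1 a)" "b \<in> B (std n P2 b)" using a b by (auto simp: A_def B_def)
    moreover have "std n P1 a \<in> Sn n" "std n P2 b \<in> Sn n" by (rule std_in)+
    ultimately show "ww \<in> (\<Union>s\<in>Sn n. \<Union>t\<in>{t \<in> Sn n. s \<circ> t = p}. A s \<times> B t)" using ab by blast
  next
    fix ww assume "ww \<in> (\<Union>s\<in>Sn n. \<Union>t\<in>{t \<in> Sn n. s \<circ> t = p}. A s \<times> B t)"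
    then obtain s t a b where st: "s \<circ> t = p" and ab: "ww = (a, b)" "a \<in> A s" "b \<in> B t" by blast
    have a: "a \<in> ?E1" and b: "b \<in> ?E2" and sa: "std n P1 a = s" and tb: "std n P2 b = t"
      using ab unfolding A_def B_def by auto
    show "ww \<in> {ww \<in> ?E1 \<times> ?E2. std n (P12 m1 P1 P2) (Phi n m1 P1 P2 ww) = p}"
      using ab(1) a b std_Phi[OF a] sa tb st by simp
  qed
  also have "card (\<Union>s\<in>Sn n. \<Union>t\<in>{t \<in> Sn n. s \<circ> t = p}. A s \<times> B t) =
      (\<Sum>s\<in>Sn n. card (\<Union>t\<in>{t \<in> Sn n. s \<circ> t = p}. A s \<times> B t))"
  proof (rule card_UN_disjoint)
    show "finite (Sn n)" by (rule finite_Sn)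
    show "\<forall>s\<in>Sn n. finite (\<Union>t\<in>{t \<in> Sn n. s \<circ> t = p}. A s \<times> B t)"
      using finA finB finite_Sn by auto
    show "\<forall>s\<in>Sn n. \<forall>s'\<in>Sn n. s \<noteq> s' \<longrightarrow>
      (\<Union>t\<in>{t \<in> Sn n. s \<circ> t = p}. A s \<times> B t) \<inter> (\<Union>t\<in>{t \<in> Sn n. s' \<circ> t = p}. A s' \<times> B t) = {}"
      unfolding A_def by blast
  qed
  also have "\<dots> = (\<Sum>s\<in>Sn n. \<Sum>t\<in>{t \<in> Sn n. s \<circ> t = p}. card (A s) * card (B t))"
  proof (rule sum.cong[OF refl])
    fix s assume "s \<in> Sn n"
    have "card (\<Union>t\<in>{t \<in> Sn n. s \<circ> t = p}. A s \<times> B t) = (\<Sum>t\<in>{t \<in> Sn n. s \<circ> t = p}. card (A s \<times> B t))"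
    proof (rule card_UN_disjoint)
      show "finite {t \<in> Sn n. s \<circ> t = p}" using finite_Sn by simp
      show "\<forall>t\<in>{t \<in> Sn n. s \<circ> t = p}. finite (A s \<times> B t)" using finA finB by auto
      show "\<forall>t\<in>{t \<in> Sn n. s \<circ> t = p}. \<forall>t'\<in>{t \<in> Sn n. s \<circ> t = p}. t \<noteq> t' \<longrightarrow> A s \<times> B t \<inter> A s \<times> B t' = {}"
        unfolding B_def by blast
    qed
    then show "card (\<Union>t\<in>{t \<in> Sn n. s \<circ> t = p}. A s \<times> B t) = (\<Sum>t\<in>{t \<in> Sn n. s \<circ> t = p}. card (A s) * card (B t))"
      by (simp add: card_cartesian_product)
  qed
  also have "\<dots> = (\<Sum>s\<in>Sn n. \<Sum>t\<in>Sn n. if s \<circ> t = p then card (A s) * card (B t) else 0)"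
    using finite_Sn by (simp add: sum.inter_filter)
  also have "\<dots> = (\<Sum>s\<in>Sn n. \<Sum>t\<in>Sn n. if s \<circ> t = p then Ncount n m1 P1 s * Ncount n m2 P2 t else 0)"
    using Ncount_std unfolding A_def B_def by (intro sum.cong refl) simp
  finally show ?thesis .
qed



lemma P12_parity:
  assumes "odd m1"
  shows "P12 m1 (\<lambda>z. even z = b1) (\<lambda>z. even z = b2) = (\<lambda>z. even z = (b1 = b2))"
proof
  fix z
  define q where "q = z div m1"
  define r where "r = z mod m1"
  have m1: "0 < m1" using assms by (cases m1) auto
  have z: "z = q * m1 + r" unfolding q_def r_def by simp
  have r: "r < m1" unfolding r_def using m1 by simp
  have ez: "even z \<longleftrightarrow> (even q \<longleftrightarrow> even r)" unfolding z using assms by auto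
  have ed: "even (fl m1 c r) \<longleftrightarrow> even r" for c
  proof (cases c)
    case False
    have "m1 - 1 - r + r = m1 - 1" using r by simp
    moreover have "even (m1 - 1)" using assms m1 by simp
    ultimately show ?thesis unfolding fl_def using False by (metis even_add)
  qed (simp add: fl_def)
  show "P12 m1 (\<lambda>z. even z = b1) (\<lambda>z. even z = b2) z = (even z = (b1 = b2))"
    unfolding P12_def dz1_def q_def[symmetric] r_def[symmetric] ed ez by auto
qed

definition Op :: "bool \<Rightarrow> nat \<Rightarrow> (nat \<Rightarrow> nat) \<Rightarrow> rat poly" where
  "Op b n p = (if b then Omega_l_poly n p else Omega_r_poly n p)"

lemma Op_eval:
  assumes "1 \<le> n" "1 \<le> k"
  shows "poly (Op b n p) (of_nat k) = of_nat (Ncount n (2*k+1) (\<lambda>z. even z = b) p)"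
proof (cases b)
  case True then show ?thesis using Omega_l_poly_eval[OF assms, of p] by (simp add: Op_def)
next
  case False then show ?thesis using Omega_r_poly_eval[OF assms, of p] by (simp add: Op_def)
qed

definition R :: "bool \<Rightarrow> nat \<Rightarrow> rat \<Rightarrow> (nat \<Rightarrow> nat) \<Rightarrow> rat" where
  "R b n x = (\<lambda>p. if p \<in> Sn n then poly (Op b n p) ((x - 1) / 2) else 0)"

lemma rho_l_R: "rho_l n = R True n" unfolding rho_l_def R_def Op_def by (simp add: fun_eq_iff)
lemma rho_r_R: "rho_r n = R False n" unfolding rho_r_def R_def Op_def by (simp add: fun_eq_iff)

definition pr :: "(rat \<Rightarrow> rat) \<Rightarrow> bool" where
  "pr f \<longleftrightarrow> (\<exists>q. \<forall>y. f y = poly q y)"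

lemma pr_const: "pr (\<lambda>y. c)" unfolding pr_def by (rule exI[of _ "[:c:]"]) simp
lemma pr_add: "pr f \<Longrightarrow> pr g \<Longrightarrow> pr (\<lambda>y. f y + g y)" unfolding pr_def by (metis poly_add)
lemma pr_diff: "pr f \<Longrightarrow> pr g \<Longrightarrow> pr (\<lambda>y. f y - g y)" unfolding pr_def by (metis poly_diff)
lemma pr_mult: "pr f \<Longrightarrow> pr g \<Longrightarrow> pr (\<lambda>y. f y * g y)" unfolding pr_def by (metis poly_mult)
lemma pr_sum: "finite A \<Longrightarrow> (\<And>a. a \<in> A \<Longrightarrow> pr (f a)) \<Longrightarrow> pr (\<lambda>y. \<Sum>a\<in>A. f a y)"
  by (induction A rule: finite_induct) (auto intro: pr_add pr_const)
lemma pr_if: "pr f \<Longrightarrow> pr (\<lambda>y. if c then f y else 0)"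
  by (cases c) (auto intro: pr_const)
lemma pr_aff: "pr (\<lambda>y. poly q (a * y + b))"
  unfolding pr_def by (rule exI[of _ "pcompose q [:b, a:]"]) (simp add: poly_pcompose algebra_simps)

lemma pr_zero:
  assumes "pr f" "infinite S" "\<forall>y\<in>S. f y = 0"
  shows "f y = 0"
proof -
  obtain q where q: "\<And>y. f y = poly q y" using assms(1) unfolding pr_def by blast
  have "q = 0"
  proof (rule ccontr)
    assume "q \<noteq> 0"
    then have "finite {y. poly q y = 0}" by (rule poly_roots_finite)
    moreover have "S \<subseteq> {y. poly q y = 0}" using assms(3) q by auto
    ultimately show False using assms(2) finite_subset by blast
  qed
  then show ?thesis using q by simp
qed

definition OS :: "rat set" where "OS = (\<lambda>k::nat. 2 * of_nat k + 1) ` {1..}"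

lemma infinite_OS: "infinite OS"
proof
  assume "finite OS"
  then have "finite ({1..} :: nat set)" unfolding OS_def by (rule finite_imageD) (auto simp: inj_on_def)
  then show False using infinite_Ici by blast
qed

lemma aff1: "(1/2) * z + (-1/2) = (z - 1) / (2::rat)" by (simp add: field_simps)
lemma aff2: "(c/2) * z + (-1/2) = (c * z - 1) / (2::rat)" by (simp add: field_simps)
lemma aff3: "(c/2) * z + (-1/2) = (z * c - 1) / (2::rat)" by (simp add: field_simps)

lemma main:
  assumes n: "1 \<le> n"
  shows "gmult n (R b1 n x) (R b2 n y) = R (b1 = b2) n (x * y)"
proof
  fix p
  let ?A = "\<lambda>s. Op b1 n s" and ?B = "\<lambda>t. Op b2 n t" and ?C = "Op (b1 = b2) n p"
  show "gmult n (R b1 n x) (R b2 n y) p = R (b1 = b2) n (x * y) p"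
  proof (cases "p \<in> Sn n")
    case False then show ?thesis by (simp add: gmult_def R_def)
  next
    case p: True
    define F where "F x y = (\<Sum>s\<in>Sn n. \<Sum>t\<in>Sn n. if s \<circ> t = p then poly (?A s) ((x - 1) / 2) * poly (?B t) ((y - 1) / 2) else 0)
        - poly ?C ((x * y - 1) / 2)" for x y
    have grid: "F x y = 0" if "x \<in> OS" "y \<in> OS" for x y
    proof -
      obtain k1 where k1: "k1 \<ge> 1" "x = 2 * of_nat k1 + 1" using \<open>x \<in> OS\<close> unfolding OS_def by auto
      obtain k2 where k2: "k2 \<ge> 1" "y = 2 * of_nat k2 + 1" using \<open>y \<in> OS\<close> unfolding OS_def by auto
      define K where "K = 2 * k1 * k2 + k1 + k2"
      have K1: "K \<ge> 1" unfolding K_def using k1 by simp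
      have ex: "(x - 1) / 2 = of_nat k1" using k1 by simp
      have ey: "(y - 1) / 2 = of_nat k2" using k2 by simp
      have exy: "(x * y - 1) / 2 = of_nat K" unfolding K_def using k1 k2 by (simp add: algebra_simps)
      have m: "2 * K + 1 = (2 * k2 + 1) * (2 * k1 + 1)" unfolding K_def by (simp add: algebra_simps)
      have "Ncount n (2 * K + 1) (\<lambda>z. even z = (b1 = b2)) p =
          (\<Sum>s\<in>Sn n. \<Sum>t\<in>Sn n. if s \<circ> t = p then Ncount n (2*k1+1) (\<lambda>z. even z = b1) s * Ncount n (2*k2+1) (\<lambda>z. even z = b2) t else 0)"
        unfolding m using prod_count[of "2*k1+1" p n "2*k2+1" "\<lambda>z. even z = b1" "\<lambda>z. even z = b2"] p
          P12_parity[of "2*k1+1" b1 b2] by simp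
      then have "(of_nat (Ncount n (2 * K + 1) (\<lambda>z. even z = (b1 = b2)) p) :: rat) =
          (\<Sum>s\<in>Sn n. \<Sum>t\<in>Sn n. if s \<circ> t = p then of_nat (Ncount n (2*k1+1) (\<lambda>z. even z = b1) s) * of_nat (Ncount n (2*k2+1) (\<lambda>z. even z = b2) t) else 0)"
      proof -
        have "(of_nat (\<Sum>s\<in>Sn n. \<Sum>t\<in>Sn n. if s \<circ> t = p then Ncount n (2*k1+1) (\<lambda>z. even z = b1) s * Ncount n (2*k2+1) (\<lambda>z. even z = b2) t else 0) :: rat) =
          (\<Sum>s\<in>Sn n. \<Sum>t\<in>Sn n. if s \<circ> t = p then of_nat (Ncount n (2*k1+1) (\<lambda>z. even z = b1) s) * of_nat (Ncount n (2*k2+1) (\<lambda>z. even z = b2) t) else 0)"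
          unfolding of_nat_sum by (intro sum.cong refl) simp
        then show ?thesis using \<open>Ncount n (2 * K + 1) (\<lambda>z. even z = (b1 = b2)) p = _\<close> by simp
      qed
      then show ?thesis unfolding F_def ex ey exy Op_eval[OF n k1(1)] Op_eval[OF n k2(1)] Op_eval[OF n K1] by simp
    qed
    have row: "F x y = 0" if "x \<in> OS" for x y
    proof (rule pr_zero[where f = "F x", OF _ infinite_OS])
      have "pr (\<lambda>y. (\<Sum>s\<in>Sn n. \<Sum>t\<in>Sn n. if s \<circ> t = p then poly (?A s) ((x - 1) / 2) * poly (?B t) ((1/2) * y + (-1/2)) else 0)
        - poly ?C ((x/2) * y + (-1/2)))"
        by (intro pr_diff pr_sum finite_Sn pr_if pr_mult pr_const pr_aff)
      then show "pr (\<lambda>y. F x y)" unfolding F_def by (simp only: aff1 aff2 mult_1 mult_1_right)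
      show "\<forall>y\<in>OS. F x y = 0" using grid that by blast
    qed
    have all: "F x y = 0" for x y
    proof (rule pr_zero[OF _ infinite_OS, of "\<lambda>x. F x y"])
      have "pr (\<lambda>x. (\<Sum>s\<in>Sn n. \<Sum>t\<in>Sn n. if s \<circ> t = p then poly (?A s) ((1/2) * x + (-1/2)) * poly (?B t) ((y - 1) / 2) else 0)
        - poly ?C ((y/2) * x + (-1/2)))"
        by (intro pr_diff pr_sum finite_Sn pr_if pr_mult pr_const pr_aff)
      then show "pr (\<lambda>x. F x y)" unfolding F_def by (simp only: aff1 aff3 mult_1 mult_1_right)
      show "\<forall>x\<in>OS. F x y = 0" using row by blast
    qed
    have "gmult n (R b1 n x) (R b2 n y) p = (\<Sum>s\<in>Sn n. \<Sum>t\<in>Sn n. if s \<circ> t = p then poly (?A s) ((x - 1) / 2) * poly (?B t) ((y - 1) / 2) else 0)"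
      unfolding gmult_def R_def using p by (auto intro!: sum.cong)
    also have "\<dots> = poly ?C ((x * y - 1) / 2)" using all[of x y] unfolding F_def by simp
    finally show ?thesis unfolding R_def using p by simp
  qed
qed

theorem theorem3p3:
  fixes n :: nat
  assumes "n \<ge> 1"
  shows "\<forall>x y :: rat.
           gmult n (rho_l n x) (rho_l n y) = rho_l n (x * y) \<and>
           gmult n (rho_r n x) (rho_r n y) = rho_l n (x * y) \<and>
           gmult n (rho_l n x) (rho_r n y) = rho_r n (x * y) \<and>
           gmult n (rho_r n x) (rho_l n y) = rho_r n (x * y)"
  unfolding rho_l_R rho_r_R using main[OF assms] by simp


end
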